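(* Let $\Phi$ be a channel matrix whose rows $P^1,\dots,P^4\in\Delta^n$ are in general position, let $Q^0$ be the equidistant point from $P^1,\dots,P^4$ with barycentric coordinate $\boldsymbol\lambda^0$, and suppose $\lambda^0_1<0$, $\lambda^0_2,\lambda^0_3,\lambda^0_4\ge0$. Let $Q^1=\pi(Q^0|L(P^2,P^3,P^4))$ with barycentric coordinate $\boldsymbol\lambda^1$ about $P^1,\dots,P^4$, and suppose $\lambda^1_2<0$, $\lambda^1_3\ge0$, $\lambda^1_4\ge0$. Let $Q^2=\pi(Q^1|L(P^3,P^4))$. Then the output distribution achieving the channel capacity is $Q^\ast=Q^2$ and the channel capacity is $C=D(P^3\|Q^2)$.
   Context: $\Delta^n=\{Q:Q_j>0,\sum_jQ_j=1\}$, $\bar\Delta^m=\{\boldsymbol\lambda:\lambda_i\ge0,\sum_i\lambda_i=1\}$; $D(Q\|Q')=\sum_jQ_j\log(Q_j/Q'_j)$. Rows are in general position if $P^2-P^1,\dots,P^m-P^1$ are linearly independent. $L(S^1,\dots,S^r)=\{\sum_i\lambda_iS^i:\sum_i\lambda_i=1\}\cap\Delta^n$; for such an affine subspace $L$, $\pi(Q'|L)$ is the unique $Q\in L$ minimizing $D(Q\|Q')$. The barycentric coordinate of $Q\in L(P^1,\dots,P^m)$ is the unique $\boldsymbol\lambda$ with $\sum_i\lambda_i=1$, $Q=\sum_i\lambda_iP^i$. The equidistant point is the unique $Q^0\in L(P^1,\dots,P^m)$ with all $D(P^i\|Q^0)$ equal. Mutual information $I(\boldsymbol\lambda,\Phi)=\sum_{i,j}\lambda_iP^i_j\log(P^i_j/Q_j)$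 with $Q=\boldsymbol\lambda\Phi$; capacity $C=\max_{\boldsymbol\lambda\in\bar\Delta^m}I(\boldsymbol\lambda,\Phi)$; the capacity-achieving output distribution is $Q^\ast=\boldsymbol\lambda^\ast\Phi$ for a maximizer $\boldsymbol\lambda^\ast$ (unique). *)

theory Defs
  imports "HOL-Analysis.Analysis"
begin

text \<open>The channel matrix is given by its
  rows P 1, ..., P m (P :: nat => real^'n); coefficient vectors are nat => real,
  only their values on the row index set matter.\<close>

definition Delta :: "(real^'n) set" where
  "Delta = {Q. (\<forall>j. Q $ j > 0) \<and> (\<Sum>j\<in>UNIV. Q $ j) = 1}"

definition barDelta :: "nat \<Rightarrow> (nat \<Rightarrow> real) set" where
  "barDelta m = {lam. (\<forall>i\<in>{1..m}. lam i \<ge> 0) \<and> (\<Sum>i\<in>{1..m}. lam i) = 1}"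

definition KL :: "real^'n \<Rightarrow> real^'n \<Rightarrow> real" where
  "KL Q Q' = (\<Sum>j\<in>UNIV. Q $ j * ln (Q $ j / Q' $ j))"

definition general_position :: "(nat \<Rightarrow> real^'n) \<Rightarrow> nat \<Rightarrow> bool" where
  "general_position P m \<longleftrightarrow>
     (\<forall>c. (\<Sum>i\<in>{2..m}. c i *\<^sub>R (P i - P 1)) = 0 \<longrightarrow> (\<forall>i\<in>{2..m}. c i = 0))"

definition affL :: "(nat \<Rightarrow> real^'n) \<Rightarrow> nat set \<Rightarrow> (real^'n) set" where
  "affL S I = {Q. \<exists>lam. (\<Sum>i\<in>I. lam i) = 1 \<and> Q = (\<Sum>i\<in>I. lam i *\<^sub>R S i)} \<inter> Delta"

definition is_Iproj :: "(real^'n) set \<Rightarrow> real^'n \<Rightarrow> real^'n \<Rightarrow> bool" where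
  "is_Iproj L Q' Q \<longleftrightarrow> Q \<in> L \<and> (\<forall>R\<in>L. KL Q Q' \<le> KL R Q')"

definition is_bary :: "(nat \<Rightarrow> real^'n) \<Rightarrow> nat \<Rightarrow> real^'n \<Rightarrow> (nat \<Rightarrow> real) \<Rightarrow> bool" where
  "is_bary P m Q lam \<longleftrightarrow> (\<Sum>i\<in>{1..m}. lam i) = 1 \<and> Q = (\<Sum>i\<in>{1..m}. lam i *\<^sub>R P i)"

definition is_equidistant :: "(nat \<Rightarrow> real^'n) \<Rightarrow> nat \<Rightarrow> real^'n \<Rightarrow> bool" where
  "is_equidistant P m Q \<longleftrightarrow> Q \<in> affL P {1..m} \<and>
     (\<forall>i\<in>{1..m}. \<forall>k\<in>{1..m}. KL (P i) Q = KL (P k) Q)"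

definition out_dist :: "(nat \<Rightarrow> real^'n) \<Rightarrow> nat \<Rightarrow> (nat \<Rightarrow> real) \<Rightarrow> real^'n" where
  "out_dist P m lam = (\<Sum>i\<in>{1..m}. lam i *\<^sub>R P i)"

definition mutual_info :: "(nat \<Rightarrow> real^'n) \<Rightarrow> nat \<Rightarrow> (nat \<Rightarrow> real) \<Rightarrow> real" where
  "mutual_info P m lam =
     (\<Sum>i\<in>{1..m}. \<Sum>j\<in>UNIV. lam i * P i $ j * ln (P i $ j / out_dist P m lam $ j))"

definition capacity :: "(nat \<Rightarrow> real^'n) \<Rightarrow> nat \<Rightarrow> real" where
  "capacity P m = (SUP lam\<in>barDelta m. mutual_info P m lam)"

end

theory Submission
  imports Defs
begin

definition lnq :: "real^'n \<Rightarrow> real^'n \<Rightarrow> real^'n" where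
  "lnq A B = (\<chi> j. ln (A $ j / B $ j))"

lemma KL_inner: "KL A B = A \<bullet> lnq A B"
  by (simp add: KL_def lnq_def inner_vec_def)

lemma Delta_pos: "A \<in> Delta \<Longrightarrow> 0 < A $ j"
  by (simp add: Delta_def)

lemma Delta_sum: "A \<in> Delta \<Longrightarrow> (\<Sum>j\<in>UNIV. A $ j) = 1"
  by (simp add: Delta_def)

lemma KL_split:
  assumes "A \<in> Delta" "B \<in> Delta" "C \<in> Delta"
  shows "KL A C = KL A B + A \<bullet> lnq B C"
proof -
  have "ln (A $ j / C $ j) = ln (A $ j / B $ j) + ln (B $ j / C $ j)" for j
  proof -
    have p: "0 < A $ j" "0 < B $ j" "0 < C $ j" using Delta_pos assms by auto
    show ?thesis using p by (simp add: ln_div)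
  qed
  then show ?thesis
    by (simp add: KL_def lnq_def inner_vec_def distrib_left sum.distrib)
qed

lemma lnq_swap:
  assumes "A \<in> Delta" "B \<in> Delta"
  shows "X \<bullet> lnq A B = - (X \<bullet> lnq B A)"
proof -
  have "ln (A $ j / B $ j) = - ln (B $ j / A $ j)" for j
  proof -
    have p: "0 < A $ j" "0 < B $ j" using Delta_pos assms by auto
    show ?thesis using p by (simp add: ln_div)
  qed
  then show ?thesis
    by (simp add: lnq_def inner_vec_def sum_negf)
qed

lemma gibbs_term:
  fixes x y :: real
  assumes "0 < x" "0 < y"
  shows "x - y \<le> x * ln (x / y)"
proof -
  have "ln (y/x) \<le> y/x - 1" using assms ln_le_minus_one[of "y/x"] by simp
  moreover have "ln (x/y) = - ln (y/x)" using assms by (simp add: ln_div)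
  ultimately have "x * ln (x/y) \<ge> x * (1 - y/x)" using assms
    by (intro mult_left_mono) auto
  moreover have "x * (1 - y/x) = x - y" using assms by (simp add: field_simps)
  ultimately show ?thesis by linarith
qed

lemma gibbs:
  assumes "A \<in> Delta" "B \<in> Delta"
  shows "0 \<le> KL A B"
proof -
  have "(\<Sum>j\<in>UNIV. A $ j - B $ j) \<le> KL A B"
    unfolding KL_def
    by (intro sum_mono gibbs_term) (use Delta_pos[OF assms(1)] Delta_pos[OF assms(2)] in auto)
  moreover have "(\<Sum>j\<in>UNIV. A $ j - B $ j) = 0"
    using Delta_sum[OF assms(1)] Delta_sum[OF assms(2)] by (simp add: sum_subtractf)
  ultimately show ?thesis by simp
qed

lemma gibbs_eq:
  assumes "A \<in> Delta" "B \<in> Delta" "KL A B = 0"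
  shows "A = B"
proof -
  have s0: "(\<Sum>j\<in>UNIV. A $ j - B $ j) = 0"
    using Delta_sum[OF assms(1)] Delta_sum[OF assms(2)] by (simp add: sum_subtractf)
  have "(\<Sum>j\<in>UNIV. A $ j * ln (A $ j / B $ j) - (A $ j - B $ j)) = 0"
    using assms(3) s0 unfolding KL_def by (simp add: sum_subtractf)
  then have all0: "\<forall>j. A $ j * ln (A $ j / B $ j) - (A $ j - B $ j) = 0"
    using sum_nonneg_eq_0_iff[of UNIV "\<lambda>j. A $ j * ln (A $ j / B $ j) - (A $ j - B $ j)"]
      gibbs_term Delta_pos[OF assms(1)] Delta_pos[OF assms(2)] by auto
  have "A $ j = B $ j" for j
  proof -
    have a: "0 < A $ j" "0 < B $ j" using Delta_pos assms by auto
    have "ln (A $ j / B $ j) = - ln (B $ j / A $ j)" using a by (simp add: ln_div)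
    then have "A $ j * ln (B $ j / A $ j) = B $ j - A $ j" using all0[rule_format, of j] by simp
    then have "ln (B $ j / A $ j) = B $ j / A $ j - 1" using a by (simp add: field_simps)
    then have "B $ j / A $ j = 1" using a by (intro ln_eq_minus_one) auto
    then show ?thesis using a by simp
  qed
  then show ?thesis by (simp add: vec_eq_iff)
qed

lemma sum14: "(\<Sum>i\<in>{1..4::nat}. f i) = f 1 + f 2 + f 3 + f 4"
  by (simp add: numeral_eq_Suc add.assoc)

lemma deriv_term:
  fixes q q' d :: real
  assumes "0 < q" "0 < q'"
  shows "((\<lambda>t. (q + t*d) * ln ((q + t*d) / q')) has_real_derivative d * ln (q/q') + d) (at 0)"
proof -
  have h1: "((\<lambda>t. q + t*d) has_real_derivative d) (at 0)"
    by (auto intro!: derivative_eq_intros)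
  have h2: "((\<lambda>t. (q + t*d) / q') has_real_derivative d / q') (at 0)"
    using assms by (auto intro!: derivative_eq_intros)
  have h3: "((\<lambda>t. ln ((q + t*d) / q')) has_real_derivative (1 / ((q + 0*d)/q')) * (d / q')) (at 0)"
    by (rule DERIV_chain2[OF DERIV_ln_divide h2]) (use assms in simp)
  have "((\<lambda>t. (q + t*d) * ln ((q + t*d) / q')) has_real_derivative
      (q + 0*d) * ((1 / ((q + 0*d)/q')) * (d / q')) + d * ln ((q + 0*d) / q')) (at 0)"
    by (rule DERIV_mult'[OF h1 h3])
  then show ?thesis using assms by (simp add: algebra_simps)
qed

lemma foc:
  assumes Q: "Q \<in> Delta" and Q': "Q' \<in> Delta" and R: "(\<Sum>j\<in>UNIV. R $ j) = 1"
    and mn: "\<forall>t. (\<forall>j. 0 < Q $ j + t * (R $ j - Q $ j)) \<longrightarrow> KL Q Q' \<le> KL (Q + t *\<^sub>R (R - Q)) Q'"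
  shows "R \<bullet> lnq Q Q' = KL Q Q'"
proof -
  define \<phi> where "\<phi> t = (\<Sum>j\<in>UNIV. (Q $ j + t * (R $ j - Q $ j)) * ln ((Q $ j + t * (R $ j - Q $ j)) / Q' $ j))" for t
  have phi: "KL (Q + t *\<^sub>R (R - Q)) Q' = \<phi> t" for t
    by (simp add: KL_def \<phi>_def algebra_simps)
  have qp: "0 < Q $ j" "0 < Q' $ j" for j using Q Q' Delta_pos by auto
  have qn: "Q $ j \<noteq> 0" "Q' $ j \<noteq> 0" for j using qp[of j] by auto
  have deriv: "(\<phi> has_real_derivative (\<Sum>j\<in>UNIV. (R $ j - Q $ j) * ln (Q $ j / Q' $ j) + (R $ j - Q $ j))) (at 0)"
    unfolding \<phi>_def by (rule DERIV_sum, rule deriv_term) (use qp in auto)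
  define d where "d = Min (range (\<lambda>j. Q $ j / (\<bar>R $ j - Q $ j\<bar> + 1)))"
  have dpos: "0 < d" unfolding d_def
    using qp by (subst Min_gr_iff) auto
  have "\<forall>y. \<bar>0 - y\<bar> < d \<longrightarrow> \<phi> 0 \<le> \<phi> y"
  proof (intro allI impI)
    fix y :: real assume y: "\<bar>0 - y\<bar> < d"
    have "0 < Q $ j + y * (R $ j - Q $ j)" for j
    proof -
      have "d \<le> Q $ j / (\<bar>R $ j - Q $ j\<bar> + 1)" unfolding d_def by (rule Min_le) auto
      then have a1: "d * (\<bar>R $ j - Q $ j\<bar> + 1) \<le> Q $ j"
        by (simp add: pos_le_divide_eq add_pos_nonneg)
      have a2: "\<bar>y\<bar> * (\<bar>R $ j - Q $ j\<bar> + 1) < d * (\<bar>R $ j - Q $ j\<bar> + 1)"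
        using y by (intro mult_strict_right_mono) auto
      have a3: "\<bar>y * (R $ j - Q $ j)\<bar> \<le> \<bar>y\<bar> * (\<bar>R $ j - Q $ j\<bar> + 1)"
        unfolding abs_mult by (rule mult_left_mono) auto
      from a1 a2 a3 have "\<bar>y * (R $ j - Q $ j)\<bar> < Q $ j" by linarith
      then show ?thesis by linarith
    qed
    then have "KL Q Q' \<le> KL (Q + y *\<^sub>R (R - Q)) Q'" using mn by blast
    then show "\<phi> 0 \<le> \<phi> y" using phi[of 0] phi[of y] by simp
  qed
  from DERIV_local_min[OF deriv dpos this]
  have "(\<Sum>j\<in>UNIV. (R $ j - Q $ j) * ln (Q $ j / Q' $ j) + (R $ j - Q $ j)) = 0" .
  moreover have "(\<Sum>j\<in>UNIV. R $ j - Q $ j) = 0"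
    using R Delta_sum[OF Q] by (simp add: sum_subtractf)
  ultimately have "(\<Sum>j\<in>UNIV. (R $ j - Q $ j) * ln (Q $ j / Q' $ j)) = 0"
    by (simp add: sum.distrib)
  then show ?thesis
    by (simp add: KL_inner lnq_def inner_vec_def left_diff_distrib sum_subtractf)
qed

lemma foc_proj:
  assumes pr: "is_Iproj (affL P I) Q' Q" and Q': "Q' \<in> Delta" and fin: "finite I"
    and rows: "\<forall>i\<in>I. P i \<in> Delta" and k: "k \<in> I"
  shows "P k \<bullet> lnq Q Q' = KL Q Q'"
proof -
  from pr have QL: "Q \<in> affL P I" and mn: "\<forall>R\<in>affL P I. KL Q Q' \<le> KL R Q'"
    by (auto simp: is_Iproj_def)
  then obtain a where a: "sum a I = 1" "Q = (\<Sum>i\<in>I. a i *\<^sub>R P i)" and Q: "Q \<in> Delta"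
    by (auto simp: affL_def)
  have Pk: "P k \<in> Delta" using rows k by auto
  show ?thesis
  proof (rule foc[OF Q Q' Delta_sum[OF Pk]], intro allI impI)
    fix t assume pos: "\<forall>j. 0 < Q $ j + t * (P k $ j - Q $ j)"
    define b where "b i = (1 - t) * a i + t * (if i = k then 1 else 0)" for i
    have e: "Q + t *\<^sub>R (P k - Q) = (\<Sum>i\<in>I. b i *\<^sub>R P i)"
    proof -
      have "(\<Sum>i\<in>I. b i *\<^sub>R P i) = (1 - t) *\<^sub>R (\<Sum>i\<in>I. a i *\<^sub>R P i) + (\<Sum>i\<in>I. (if i = k then t else 0) *\<^sub>R P i)"
      proof -
        have "b i *\<^sub>R P i = (1 - t) *\<^sub>R (a i *\<^sub>R P i) + (if i = k then t else 0) *\<^sub>R P i" for i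
          unfolding b_def by (simp add: scaleR_add_left)
        then show ?thesis by (simp add: sum.distrib scaleR_sum_right)
      qed
      also have "(\<Sum>i\<in>I. (if i = k then t else 0) *\<^sub>R P i) = t *\<^sub>R P k"
      proof -
        have "(if i = k then t else 0) *\<^sub>R P i = (if i = k then t *\<^sub>R P k else 0)" for i by simp
        then show ?thesis using fin k by (simp add: sum.delta)
      qed
      finally show ?thesis using a(2) by (simp add: algebra_simps)
    qed
    have sb: "sum b I = 1"
      unfolding b_def using a(1) fin k by (simp add: sum.distrib sum_distrib_left[symmetric] sum.delta)
    have "Q + t *\<^sub>R (P k - Q) \<in> Delta"
    proof -
      have "(\<Sum>j\<in>UNIV. Q $ j + t * (P k $ j - Q $ j)) = 1"
        using Delta_sum[OF Q] Delta_sum[OF Pk]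
        by (simp add: sum.distrib sum_distrib_left[symmetric] sum_subtractf)
      then show ?thesis using pos by (simp add: Delta_def)
    qed
    then have "Q + t *\<^sub>R (P k - Q) \<in> affL P I" using e sb by (auto simp: affL_def)
    then show "KL Q Q' \<le> KL (Q + t *\<^sub>R (P k - Q)) Q'" using mn by blast
  qed
qed

lemma conv_term:
  fixes x y q a :: real
  assumes "0 < x" "0 < y" "0 < q" "0 \<le> a" "a \<le> 1" "x = a * y + (1 - a) * q"
  shows "x * ln (x / q) \<le> a * (y * ln (y / q))"
proof -
  have l1: "y * ln (x / y) \<le> x - y"
  proof -
    have "ln (x/y) \<le> x/y - 1" using ln_le_minus_one[of "x/y"] assms(1-3) by simp
    then have "y * ln (x/y) \<le> y * (x/y - 1)" using assms(1-3) by (intro mult_left_mono) auto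
    moreover have "y * (x/y - 1) = x - y" using assms(1-3) by (simp add: field_simps)
    ultimately show ?thesis by simp
  qed
  have l2: "q * ln (x / q) \<le> x - q"
  proof -
    have "ln (x/q) \<le> x/q - 1" using ln_le_minus_one[of "x/q"] assms(1-3) by simp
    then have "q * ln (x/q) \<le> q * (x/q - 1)" using assms(1-3) by (intro mult_left_mono) auto
    moreover have "q * (x/q - 1) = x - q" using assms(1-3) by (simp add: field_simps)
    ultimately show ?thesis by simp
  qed
  have e: "ln (x / q) = ln (x / y) + ln (y / q)" using assms by (simp add: ln_div)
  have gen: "\<And>L1 L2. (a*y+(1-a)*q)*(L1+L2) - a*(y*L2) = a*(y*L1) + (1-a)*(q*(L1+L2))"
    by (simp add: algebra_simps)
  have h: "x * (ln (x/y) + ln (y/q)) = (a*y+(1-a)*q) * (ln (x/y) + ln (y/q))"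
    using assms(6) by simp
  have "x * ln (x / q) - a * (y * ln (y / q)) = a * (y * ln (x / y)) + (1 - a) * (q * ln (x / q))"
    unfolding e h gen ..
  also have "\<dots> \<le> a * (x - y) + (1 - a) * (x - q)"
    using l1 l2 assms by (intro add_mono mult_left_mono) auto
  also have "\<dots> = 0" using assms(6) by (simp add: algebra_simps)
  finally show ?thesis by simp
qed

lemma seg_neg:
  assumes X: "X \<in> Delta" and Y: "Y \<in> Delta" and Q: "Q \<in> Delta"
    and e: "Q = c *\<^sub>R X + (1 - c) *\<^sub>R Y" and c: "c < 0" and XY: "X \<noteq> Y"
  shows "KL Y Q < KL X Q"
proof -
  define a where "a = - c / (1 - c)"
  have a0: "0 \<le> a" "a < 1" using c by (auto simp: a_def field_simps)
  have comp: "Y $ j = a * X $ j + (1 - a) * Q $ j" for j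
  proof -
    have "Q $ j = c * X $ j + (1 - c) * Y $ j" using e by simp
    then have "Y $ j = (Q $ j - c * X $ j) / (1 - c)" using c by (simp add: field_simps)
    moreover have "a * X $ j + (1 - a) * Q $ j = (Q $ j - c * X $ j) / (1 - c)"
    proof -
      have nz: "1 - c \<noteq> 0" using c by simp
      have "1 - a = 1 / (1 - c)" using nz by (simp add: a_def field_simps)
      then have "a * X $ j + (1 - a) * Q $ j = (- c * X $ j) / (1 - c) + Q $ j / (1 - c)"
        by (simp add: a_def)
      also have "\<dots> = (Q $ j - c * X $ j) / (1 - c)" by (simp add: diff_divide_distrib)
      finally show ?thesis .
    qed
    ultimately show ?thesis by simp
  qed
  have "KL Y Q \<le> (\<Sum>j\<in>UNIV. a * (X $ j * ln (X $ j / Q $ j)))"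
    unfolding KL_def
    by (intro sum_mono conv_term[OF Delta_pos[OF Y] Delta_pos[OF X] Delta_pos[OF Q] a0(1) _ comp]) (use a0 in auto)
  also have "\<dots> = a * KL X Q" by (simp add: KL_def sum_distrib_left)
  finally have le: "KL Y Q \<le> a * KL X Q" .
  have "X \<noteq> Q"
  proof
    assume "X = Q"
    then have xe: "X = c *\<^sub>R X + (1 - c) *\<^sub>R Y" using e by simp
    have "(1 - c) *\<^sub>R (Y - X) = (c *\<^sub>R X + (1 - c) *\<^sub>R Y) - X" by (simp add: algebra_simps)
    then have "(1 - c) *\<^sub>R (Y - X) = 0" using xe by simp
    then show False using c XY by simp
  qed
  then have "KL X Q \<noteq> 0" using gibbs_eq X Q by blast
  then have "0 < KL X Q" using gibbs[OF X Q] by simp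
  then have "a * KL X Q < KL X Q" using a0 by simp
  then show ?thesis using le by simp
qed

lemma out_dist_Delta:
  assumes rows: "\<forall>i\<in>{1..m}. P i \<in> Delta" and lam: "lam \<in> barDelta m"
  shows "out_dist P m lam \<in> Delta"
proof -
  have l0: "\<forall>i\<in>{1..m}. 0 \<le> lam i" and l1: "(\<Sum>i\<in>{1..m}. lam i) = 1"
    using lam by (auto simp: barDelta_def)
  have "\<exists>k\<in>{1..m}. 0 < lam k"
  proof (rule ccontr)
    assume "\<not> ?thesis"
    then have "\<forall>i\<in>{1..m}. lam i \<le> 0" by force
    then have "(\<Sum>i\<in>{1..m}. lam i) \<le> 0" by (intro sum_nonpos) auto
    then show False using l1 by simp
  qed
  then obtain k where k: "k \<in> {1..m}" "0 < lam k" by blast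
  have pos: "0 < out_dist P m lam $ j" for j
  proof -
    have "out_dist P m lam $ j = (\<Sum>i\<in>{1..m}. lam i * P i $ j)" by (simp add: out_dist_def)
    also have "\<dots> > 0"
    proof (rule sum_pos2[of _ k])
      have "P k \<in> Delta" using rows k(1) by blast
      then show "0 < lam k * P k $ j" using k Delta_pos by (intro mult_pos_pos) auto
      fix i assume i: "i \<in> {1..m}"
      have "P i \<in> Delta" using rows i by blast
      then show "0 \<le> lam i * P i $ j" using l0 i Delta_pos[of "P i" j]
        by (intro mult_nonneg_nonneg) auto
    qed (use k in auto)
    finally show ?thesis .
  qed
  have "(\<Sum>j\<in>UNIV. out_dist P m lam $ j) = (\<Sum>i\<in>{1..m}. lam i * (\<Sum>j\<in>UNIV. P i $ j))"
    by (simp add: out_dist_def sum_distrib_left sum.swap[of _ UNIV])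
  also have "\<dots> = (\<Sum>i\<in>{1..m}. lam i)" 
  proof (rule sum.cong)
    fix i assume "i \<in> {1..m}"
    then have Pi: "P i \<in> Delta" using rows by blast
    then show "lam i * (\<Sum>j\<in>UNIV. P i $ j) = lam i" using Delta_sum[OF Pi] by simp
  qed simp
  finally show ?thesis using pos l1 by (simp add: Delta_def)
qed

lemma mi_decomp:
  assumes rows: "\<forall>i\<in>{1..m}. P i \<in> Delta" and lam: "lam \<in> barDelta m" and Q: "Q \<in> Delta"
  shows "mutual_info P m lam = (\<Sum>i\<in>{1..m}. lam i * KL (P i) Q) - KL (out_dist P m lam) Q"
proof -
  let ?O = "out_dist P m lam"
  have O: "?O \<in> Delta" by (rule out_dist_Delta[OF rows lam])
  have "mutual_info P m lam = (\<Sum>i\<in>{1..m}. lam i * KL (P i) ?O)"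
    by (simp add: mutual_info_def KL_def sum_distrib_left mult.assoc)
  also have "\<dots> = (\<Sum>i\<in>{1..m}. lam i * KL (P i) Q + lam i * (P i \<bullet> lnq Q ?O))"
    using rows by (intro sum.cong refl) (simp add: KL_split[OF _ Q O] distrib_left)
  also have "\<dots> = (\<Sum>i\<in>{1..m}. lam i * KL (P i) Q) + ?O \<bullet> lnq Q ?O"
    by (simp add: sum.distrib out_dist_def inner_sum_left)
  also have "?O \<bullet> lnq Q ?O = - KL ?O Q"
    using lnq_swap[OF Q O] by (simp add: KL_inner)
  finally show ?thesis by simp
qed

lemma KL_self: "KL Q Q = 0" if "Q \<in> Delta"
proof -
  have "Q $ j \<noteq> 0" for j using Delta_pos[OF that, of j] by simp
  then show ?thesis by (simp add: KL_def)
qed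

lemma sum24: "(\<Sum>i\<in>{2..4::nat}. f i) = f 2 + f 3 + f 4"
  by (simp add: numeral_eq_Suc add.assoc)

lemma neg_coef:
  fixes l b d :: real
  assumes "l < 0" "l * b + (1 - l) * d \<le> 0" "0 \<le> d"
  shows "d \<le> b"
proof (rule ccontr)
  assume "\<not> d \<le> b"
  then have "0 < l * (b - d)" using assms(1) by (intro mult_neg_neg) auto
  moreover have "l * b + (1 - l) * d = l * (b - d) + d" by (simp add: algebra_simps)
  ultimately show False using assms by linarith
qed

theorem theorem19:
  fixes P :: "nat \<Rightarrow> real^'n" and Q0 Q1 Q2 :: "real^'n" and lam0 lam1 :: "nat \<Rightarrow> real"
  assumes rows: "\<forall>i\<in>{1..4}. P i \<in> Delta"
    and gp: "general_position P 4"
    and eq0: "is_equidistant P 4 Q0"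
    and bary0: "is_bary P 4 Q0 lam0"
    and s0: "lam0 1 < 0" "lam0 2 \<ge> 0" "lam0 3 \<ge> 0" "lam0 4 \<ge> 0"
    and proj1: "is_Iproj (affL P {2,3,4}) Q0 Q1"
    and bary1: "is_bary P 4 Q1 lam1"
    and s1: "lam1 2 < 0" "lam1 3 \<ge> 0" "lam1 4 \<ge> 0"
    and proj2: "is_Iproj (affL P {3,4}) Q1 Q2"
  shows "(\<exists>lam\<in>barDelta 4. mutual_info P 4 lam = capacity P 4)
       \<and> (\<forall>lam\<in>barDelta 4. mutual_info P 4 lam = capacity P 4 \<longrightarrow> out_dist P 4 lam = Q2)
       \<and> capacity P 4 = KL (P 3) Q2"
proof -
  have P1: "P 1 \<in> Delta" and P2: "P 2 \<in> Delta" and P3: "P 3 \<in> Delta" and P4: "P 4 \<in> Delta"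
    using rows by auto
  have Q0: "Q0 \<in> Delta" using eq0 by (auto simp: is_equidistant_def affL_def)
  have eqs: "\<forall>i\<in>{1..4}. \<forall>k\<in>{1..4}. KL (P i) Q0 = KL (P k) Q0"
    using eq0 unfolding is_equidistant_def by blast
  have d0: "KL (P i) Q0 = KL (P 1) Q0" if "i \<in> {1..4}" for i
  proof -
    have "(1::nat) \<in> {1..4}" by simp
    then show ?thesis using bspec[OF bspec[OF eqs that]] by blast
  qed
  have Q1L: "Q1 \<in> affL P {2,3,4}" using proj1 by (simp add: is_Iproj_def)
  then obtain a :: "nat \<Rightarrow> real" where a: "a 2 + a 3 + a 4 = 1" "Q1 = a 2 *\<^sub>R P 2 + a 3 *\<^sub>R P 3 + a 4 *\<^sub>R P 4"
    and Q1: "Q1 \<in> Delta"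
    by (auto simp: affL_def add.assoc)
  have Q2L: "Q2 \<in> affL P {3,4}" using proj2 by (simp add: is_Iproj_def)
  then obtain b :: "nat \<Rightarrow> real" where b: "b 3 + b 4 = 1" "Q2 = b 3 *\<^sub>R P 3 + b 4 *\<^sub>R P 4"
    and Q2: "Q2 \<in> Delta"
    by (auto simp: affL_def)
  have gp4: "\<And>c :: nat \<Rightarrow> real. c 2 *\<^sub>R (P 2 - P 1) + c 3 *\<^sub>R (P 3 - P 1) + c 4 *\<^sub>R (P 4 - P 1) = 0
      \<Longrightarrow> c 2 = 0 \<and> c 3 = 0 \<and> c 4 = 0"
    using gp unfolding general_position_def sum24 by auto
  have l1: "lam1 1 + lam1 2 + lam1 3 + lam1 4 = 1"
    "Q1 = lam1 1 *\<^sub>R P 1 + lam1 2 *\<^sub>R P 2 + lam1 3 *\<^sub>R P 3 + lam1 4 *\<^sub>R P 4"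
    using bary1 unfolding is_bary_def sum14 by auto
  have l0: "lam0 1 + lam0 2 + lam0 3 + lam0 4 = 1"
    "Q0 = lam0 1 *\<^sub>R P 1 + lam0 2 *\<^sub>R P 2 + lam0 3 *\<^sub>R P 3 + lam0 4 *\<^sub>R P 4"
    using bary0 unfolding is_bary_def sum14 by auto
  have a2: "a 2 = lam1 2"
  proof -
    define c where "c i = lam1 i - a i" for i
    have "c 2 *\<^sub>R (P 2 - P 1) + c 3 *\<^sub>R (P 3 - P 1) + c 4 *\<^sub>R (P 4 - P 1)
        = (lam1 1 *\<^sub>R P 1 + lam1 2 *\<^sub>R P 2 + lam1 3 *\<^sub>R P 3 + lam1 4 *\<^sub>R P 4)
          - (a 2 *\<^sub>R P 2 + a 3 *\<^sub>R P 3 + a 4 *\<^sub>R P 4)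
          - (lam1 1 + lam1 2 + lam1 3 + lam1 4 - 1) *\<^sub>R P 1
          + (a 2 + a 3 + a 4 - 1) *\<^sub>R P 1"
      unfolding c_def by (simp add: algebra_simps)
    also have "\<dots> = 0" using a l1 by simp
    finally show ?thesis using gp4[of c] by (simp add: c_def)
  qed
  have P34: "P 3 \<noteq> P 4"
  proof
    assume e: "P 3 = P 4"
    define c where "c i = (if i = (3::nat) then (1::real) else if i = 4 then -1 else 0)" for i
    have "c 2 *\<^sub>R (P 2 - P 1) + c 3 *\<^sub>R (P 3 - P 1) + c 4 *\<^sub>R (P 4 - P 1) = 0"
      using e by (simp add: c_def)
    then show False using gp4[of c] by (simp add: c_def)
  qed
  define f where "f = lnq Q1 Q0"
  define g where "g = lnq Q2 Q1"
  define \<delta>1 where "\<delta>1 = KL Q1 Q0"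
  define \<delta>2 where "\<delta>2 = KL Q2 Q1"
  have \<delta>1pos: "0 \<le> \<delta>1" unfolding \<delta>1_def by (rule gibbs[OF Q1 Q0])
  have \<delta>2pos: "0 \<le> \<delta>2" unfolding \<delta>2_def by (rule gibbs[OF Q2 Q1])
  have F1: "P i \<bullet> f = \<delta>1" if "i \<in> {2,3,4}" for i
    unfolding f_def \<delta>1_def using rows that
    by (intro foc_proj[OF proj1 Q0]) auto
  have F2: "P i \<bullet> g = \<delta>2" if "i \<in> {3,4}" for i
    unfolding g_def \<delta>2_def using rows that
    by (intro foc_proj[OF proj2 Q1]) auto
  have Q1g: "Q1 \<bullet> g = - KL Q1 Q2" unfolding g_def using lnq_swap[OF Q2 Q1] by (simp add: KL_inner)
  have "Q1 \<bullet> g = a 2 * (P 2 \<bullet> g) + (1 - a 2) * \<delta>2"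
  proof -
    have "Q1 \<bullet> g = a 2 * (P 2 \<bullet> g) + a 3 * \<delta>2 + a 4 * \<delta>2"
      using a(2) F2 by (simp add: inner_add_left)
    moreover have "1 - a 2 = a 3 + a 4" using a(1) by simp
    then have "(1 - a 2) * \<delta>2 = a 3 * \<delta>2 + a 4 * \<delta>2" by (simp add: distrib_right)
    ultimately show ?thesis by (simp add: mult.commute)
  qed
  then have "a 2 * (P 2 \<bullet> g) + (1 - a 2) * \<delta>2 \<le> 0"
    using Q1g gibbs[OF Q1 Q2] by simp
  moreover have "a 2 < 0" using a2 s1(1) by simp
  ultimately have g2: "\<delta>2 \<le> P 2 \<bullet> g" using \<delta>2pos neg_coef by blast
  define e where "e i = P i \<bullet> f + P i \<bullet> g" for i
  define \<delta> where "\<delta> = \<delta>1 + \<delta>2"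
  have e34: "e 3 = \<delta>" "e 4 = \<delta>" using F1 F2 by (auto simp: e_def \<delta>_def)
  have e2: "\<delta> \<le> e 2" using F1 g2 by (simp add: e_def \<delta>_def)
  have Q0f: "Q0 \<bullet> f = - KL Q0 Q1" unfolding f_def using lnq_swap[OF Q1 Q0] by (simp add: KL_inner)
  have Q0g: "Q0 \<bullet> g = KL Q0 Q1 - KL Q0 Q2" unfolding g_def using KL_split[OF Q0 Q2 Q1] by simp
  have "lam0 1 * e 1 + lam0 2 * e 2 + lam0 3 * e 3 + lam0 4 * e 4 = Q0 \<bullet> f + Q0 \<bullet> g"
    using l0(2) by (simp add: e_def inner_add_left algebra_simps)
  also have "\<dots> \<le> 0" using Q0f Q0g gibbs[OF Q0 Q2] by simp
  finally have "lam0 1 * e 1 + lam0 2 * e 2 + lam0 3 * \<delta> + lam0 4 * \<delta> \<le> 0" using e34 by simp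
  moreover have "lam0 2 * \<delta> \<le> lam0 2 * e 2" using e2 s0(2) by (intro mult_left_mono)
  moreover have "\<delta> * (lam0 1 + lam0 2 + lam0 3 + lam0 4) = \<delta>" using l0(1) by simp
  then have "lam0 1 * \<delta> + lam0 2 * \<delta> + lam0 3 * \<delta> + lam0 4 * \<delta> = \<delta>"
    by (simp add: algebra_simps)
  moreover have "(1 - lam0 1) * \<delta> = \<delta> - lam0 1 * \<delta>" by (simp add: algebra_simps)
  ultimately have "lam0 1 * e 1 + (1 - lam0 1) * \<delta> \<le> 0" by linarith
  moreover have "0 \<le> \<delta>" using \<delta>1pos \<delta>2pos by (simp add: \<delta>_def)
  ultimately have e1: "\<delta> \<le> e 1" using s0(1) neg_coef by blast
  define C0 where "C0 = KL (P 1) Q0 - \<delta>"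
  have KLe: "KL (P i) Q2 = C0 + \<delta> - e i" if "i \<in> {1..4}" for i
  proof -
    have Pi: "P i \<in> Delta" using rows that by blast
    have "KL (P i) Q0 = KL (P i) Q2 + e i"
      using KL_split[OF Pi Q1 Q0] KL_split[OF Pi Q2 Q1] by (simp add: e_def f_def g_def)
    then show ?thesis using d0[OF that] by (simp add: C0_def)
  qed
  have KLle: "KL (P i) Q2 \<le> C0" if "i \<in> {1..4}" for i
  proof -
    have "i = 1 \<or> i = 2 \<or> i = 3 \<or> i = 4" using that by auto
    then have "\<delta> \<le> e i" using e1 e2 e34 by auto
    then show ?thesis using KLe[OF that] by simp
  qed
  have K3: "KL (P 3) Q2 = C0" and K4: "KL (P 4) Q2 = C0" using KLe e34 by auto
  have b3: "0 \<le> b 3"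
  proof (rule ccontr)
    assume "\<not> 0 \<le> b 3"
    moreover have "Q2 = b 3 *\<^sub>R P 3 + (1 - b 3) *\<^sub>R P 4"
    proof -
      have "1 - b 3 = b 4" using b(1) by simp
      then show ?thesis using b(2) by simp
    qed
    ultimately have "KL (P 4) Q2 < KL (P 3) Q2"
      using seg_neg[OF P3 P4 Q2 _ _ P34, where c = "b 3"] by simp
    then show False using K3 K4 by simp
  qed
  have b4: "0 \<le> b 4"
  proof (rule ccontr)
    assume "\<not> 0 \<le> b 4"
    moreover have "Q2 = b 4 *\<^sub>R P 4 + (1 - b 4) *\<^sub>R P 3"
    proof -
      have "1 - b 4 = b 3" using b(1) by simp
      then show ?thesis using b(2) by (simp add: add.commute)
    qed
    moreover have "P 4 \<noteq> P 3" using P34 by simp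
    ultimately have "KL (P 3) Q2 < KL (P 4) Q2"
      using seg_neg[OF P4 P3 Q2, where c = "b 4"] by simp
    then show False using K3 K4 by simp
  qed
  define lamS where "lamS i = (if i = (3::nat) then b 3 else if i = 4 then b 4 else 0)" for i
  have lamS: "lamS \<in> barDelta 4"
    unfolding barDelta_def sum14 using b3 b4 b(1) by (auto simp: lamS_def)
  have oS: "out_dist P 4 lamS = Q2" unfolding out_dist_def sum14 using b(2) by (simp add: lamS_def)
  have miS: "mutual_info P 4 lamS = C0"
  proof -
    have "mutual_info P 4 lamS = b 3 * C0 + b 4 * C0"
      using mi_decomp[OF rows lamS Q2, unfolded sum14] oS KL_self[OF Q2] K3 K4
      by (simp add: lamS_def)
    also have "\<dots> = C0" using b(1) by (simp add: distrib_right[symmetric])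
    finally show ?thesis .
  qed
  have bound: "mutual_info P 4 lam \<le> C0 - KL (out_dist P 4 lam) Q2" if lam: "lam \<in> barDelta 4" for lam
  proof -
    have "(\<Sum>i\<in>{1..4}. lam i * KL (P i) Q2) \<le> (\<Sum>i\<in>{1..4}. lam i * C0)"
      using lam KLle by (intro sum_mono mult_left_mono) (auto simp: barDelta_def)
    also have "\<dots> = C0" using lam by (simp add: barDelta_def sum_distrib_right[symmetric])
    finally show ?thesis using mi_decomp[OF rows lam Q2] by simp
  qed
  have bound2: "mutual_info P 4 lam \<le> C0" if "lam \<in> barDelta 4" for lam
    using bound[OF that] gibbs[OF out_dist_Delta[OF rows that] Q2] by simp
  have cap: "capacity P 4 = C0"
    unfolding capacity_def
    by (rule cSup_eq_maximum) (use lamS miS bound2 in \<open>auto simp: image_iff intro: bexI[of _ lamS]\<close>)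
  have uniq: "out_dist P 4 lam = Q2" if "lam \<in> barDelta 4" "mutual_info P 4 lam = capacity P 4" for lam
  proof -
    have O: "out_dist P 4 lam \<in> Delta" by (rule out_dist_Delta[OF rows that(1)])
    have "KL (out_dist P 4 lam) Q2 \<le> 0" using bound[OF that(1)] that(2) cap by simp
    then have "KL (out_dist P 4 lam) Q2 = 0" using gibbs[OF O Q2] by simp
    then show ?thesis using gibbs_eq[OF O Q2] by simp
  qed
  show ?thesis using lamS miS cap uniq K3 by auto
qed

end
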